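(* Let $\alpha_2,\alpha_3,k$ be positive integers with $\alpha_2,\alpha_3$ coprime, and let $X_1=\{x+x^ky^{k-1}+z^{\alpha_2}+t^{\alpha_3}=0\}\subset\mathbb{A}^4=\mathrm{Spec}(\mathbb{C}[x,y,z,t])$ with the $\mathbb{G}_m$-action induced by $\lambda\cdot(x,y,z,t)=(\lambda^{\alpha_2\alpha_3}x,\lambda^{-\alpha_2\alpha_3}y,\lambda^{\alpha_3}z,\lambda^{\alpha_2}t)$. Let $d\ge2$ be an integer with $d\alpha_3$ and $\alpha_2$ coprime, and let $X_2=\{x+y^{d-1}(x^d+z^{\alpha_2})+t^{\alpha_3}=0\}\subset\mathbb{A}^4$ with the $\mathbb{G}_m$-action induced by $\lambda\cdot(x,y,z,t)=(\lambda^{\alpha_2\alpha_3}x,\lambda^{-\alpha_2\alpha_3}y,\lambda^{d\alpha_3}z,\lambda^{\alpha_2}t)$. Then $X_1$ and $X_2$ are $\mathbb{G}_m$-linearly rational.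
   Context: Each of these hyperbolic $\mathbb{G}_m$-varieties has the origin as its unique fixed point. A $\mathbb{G}_m$-variety with a unique fixed point $x_0$ is $\mathbb{G}_m$-linearly rational if there exist a $\mathbb{G}_m$-stable open neighborhood $U$ of $x_0$, a linear $\mathbb{G}_m$-representation $V\simeq\mathbb{A}^n$ and a $\mathbb{G}_m$-stable open subset $U'\subset V$ such that $U$ is $\mathbb{G}_m$-equivariantly isomorphic to $U'$. *)

theory Defs
  imports Complex_Main "HOL-Computational_Algebra.Polynomial"
begin

text \<open>Complex affine n-space: points are functions nat => complex vanishing from index n on.\<close>
definition aff :: "nat \<Rightarrow> (nat \<Rightarrow> complex) set" where
  "aff n = {p. \<forall>i\<ge>n. p i = 0}"

inductive_set polyfun :: "nat \<Rightarrow> ((nat \<Rightarrow> complex) \<Rightarrow> complex) set" for n :: nat where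
  pf_const: "(\<lambda>p. c) \<in> polyfun n"
| pf_var: "i < n \<Longrightarrow> (\<lambda>p. p i) \<in> polyfun n"
| pf_add: "f \<in> polyfun n \<Longrightarrow> g \<in> polyfun n \<Longrightarrow> (\<lambda>p. f p + g p) \<in> polyfun n"
| pf_mult: "f \<in> polyfun n \<Longrightarrow> g \<in> polyfun n \<Longrightarrow> (\<lambda>p. f p * g p) \<in> polyfun n"

definition zariski_open :: "nat \<Rightarrow> (nat \<Rightarrow> complex) set \<Rightarrow> bool" where
  "zariski_open n W \<longleftrightarrow>
     (\<exists>S \<subseteq> polyfun n. W = aff n - {q \<in> aff n. \<forall>s\<in>S. s q = 0})"

definition regular_on :: "nat \<Rightarrow> (nat \<Rightarrow> complex) set \<Rightarrow> ((nat \<Rightarrow> complex) \<Rightarrow> complex) \<Rightarrow> bool" where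
  "regular_on n U f \<longleftrightarrow>
     (\<forall>p\<in>U. \<exists>g h W. g \<in> polyfun n \<and> h \<in> polyfun n \<and> zariski_open n W \<and> p \<in> W \<and>
        (\<forall>q\<in>U \<inter> W. h q \<noteq> 0 \<and> f q = g q / h q))"

definition regular_map :: "nat \<Rightarrow> nat \<Rightarrow> (nat \<Rightarrow> complex) set \<Rightarrow>
    ((nat \<Rightarrow> complex) \<Rightarrow> (nat \<Rightarrow> complex)) \<Rightarrow> bool" where
  "regular_map n m U F \<longleftrightarrow> (\<forall>i<m. regular_on n U (\<lambda>q. F q i)) \<and> (\<forall>q\<in>U. F q \<in> aff m)"

text \<open>Linear (algebraic) representations of G_m on C^m: matrix entries are Laurent
  polynomials in lambda, and the group laws hold.\<close>
definition lin_gm_rep :: "nat \<Rightarrow> (complex \<Rightarrow> (nat \<Rightarrow> complex) \<Rightarrow> (nat \<Rightarrow> complex)) \<Rightarrow> bool" where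
  "lin_gm_rep m \<rho> \<longleftrightarrow>
     (\<exists>(N::nat) (P :: nat \<Rightarrow> nat \<Rightarrow> complex poly).
        \<forall>l. l \<noteq> 0 \<longrightarrow> (\<forall>v\<in>aff m.
          \<rho> l v = (\<lambda>i. if i < m then (\<Sum>j<m. (poly (P i j) l / l ^ N) * v j) else 0)))
     \<and> (\<forall>v\<in>aff m. \<rho> 1 v = v)
     \<and> (\<forall>l u v. l \<noteq> 0 \<longrightarrow> u \<noteq> 0 \<longrightarrow> v \<in> aff m \<longrightarrow> \<rho> (l * u) v = \<rho> l (\<rho> u v))"

definition gm_linearly_rational ::
  "nat \<Rightarrow> (nat \<Rightarrow> complex) set \<Rightarrow> (complex \<Rightarrow> (nat \<Rightarrow> complex) \<Rightarrow> (nat \<Rightarrow> complex))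
     \<Rightarrow> (nat \<Rightarrow> complex) \<Rightarrow> bool" where
  "gm_linearly_rational n X act x0 \<longleftrightarrow>
     (\<exists>U W. zariski_open n W \<and> U = X \<inter> W \<and> x0 \<in> U \<and>
        (\<forall>l p. l \<noteq> 0 \<longrightarrow> p \<in> U \<longrightarrow> act l p \<in> U) \<and>
      (\<exists>m \<rho> U' \<phi> \<psi>. lin_gm_rep m \<rho> \<and> zariski_open m U' \<and>
        (\<forall>l v. l \<noteq> 0 \<longrightarrow> v \<in> U' \<longrightarrow> \<rho> l v \<in> U') \<and>
        regular_map n m U \<phi> \<and> regular_map m n U' \<psi> \<and>
        \<phi> ` U \<subseteq> U' \<and> \<psi> ` U' \<subseteq> U \<and>
        (\<forall>p\<in>U. \<psi> (\<phi> p) = p) \<and> (\<forall>v\<in>U'. \<phi> (\<psi> v) = v) \<and>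
        (\<forall>l p. l \<noteq> 0 \<longrightarrow> p \<in> U \<longrightarrow> \<phi> (act l p) = \<rho> l (\<phi> p))))"

text \<open>Diagonal action on C^4 with integer weights (w0,w1,w2,w3); coordinates x,y,z,t = p 0..p 3.\<close>
definition diag4 :: "int \<Rightarrow> int \<Rightarrow> int \<Rightarrow> int \<Rightarrow> complex \<Rightarrow> (nat \<Rightarrow> complex) \<Rightarrow> (nat \<Rightarrow> complex)" where
  "diag4 w0 w1 w2 w3 l p = (\<lambda>i. if i = 0 then l powi w0 * p 0 else if i = 1 then l powi w1 * p 1
      else if i = 2 then l powi w2 * p 2 else if i = 3 then l powi w3 * p 3 else 0)"

definition X1 :: "nat \<Rightarrow> nat \<Rightarrow> nat \<Rightarrow> (nat \<Rightarrow> complex) set" where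
  "X1 a2 a3 k = {p \<in> aff 4. p 0 + p 0 ^ k * p 1 ^ (k - 1) + p 2 ^ a2 + p 3 ^ a3 = 0}"

definition X2 :: "nat \<Rightarrow> nat \<Rightarrow> nat \<Rightarrow> (nat \<Rightarrow> complex) set" where
  "X2 a2 a3 d = {p \<in> aff 4. p 0 + p 1 ^ (d - 1) * (p 0 ^ d + p 2 ^ a2) + p 3 ^ a3 = 0}"

definition origin :: "nat \<Rightarrow> complex" where "origin = (\<lambda>i. 0)"

end

theory Submission
  imports Defs
begin

lemma pf_pow: "f \<in> polyfun n \<Longrightarrow> (\<lambda>p. f p ^ k) \<in> polyfun n"
  by (induction k) (auto intro: polyfun.intros)

lemma pf_uminus: "f \<in> polyfun n \<Longrightarrow> (\<lambda>p. - f p) \<in> polyfun n"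
  using pf_mult[OF pf_const[of "-1"]] by simp

definition rat_on :: "nat \<Rightarrow> (nat \<Rightarrow> complex) set \<Rightarrow> ((nat \<Rightarrow> complex) \<Rightarrow> complex) \<Rightarrow> bool" where
  "rat_on n U f \<longleftrightarrow> (\<exists>g h. g \<in> polyfun n \<and> h \<in> polyfun n \<and> (\<forall>q\<in>U. h q \<noteq> 0 \<and> f q = g q / h q))"

lemma rat_pf: "g \<in> polyfun n \<Longrightarrow> rat_on n U g"
  unfolding rat_on_def by (rule exI[of _ g], rule exI[of _ "\<lambda>p. 1"]) (auto intro: polyfun.intros)

lemma rat_const: "rat_on n U (\<lambda>p. c)"
  by (rule rat_pf) (rule pf_const)

lemma rat_var: "i < n \<Longrightarrow> rat_on n U (\<lambda>p. p i)"
  by (rule rat_pf) (rule pf_var)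

lemma rat_add: "rat_on n U f \<Longrightarrow> rat_on n U g \<Longrightarrow> rat_on n U (\<lambda>p. f p + g p)"
proof -
  assume "rat_on n U f" "rat_on n U g"
  then obtain g1 h1 g2 h2 where a: "g1 \<in> polyfun n" "h1 \<in> polyfun n" "\<forall>q\<in>U. h1 q \<noteq> 0 \<and> f q = g1 q / h1 q"
     "g2 \<in> polyfun n" "h2 \<in> polyfun n" "\<forall>q\<in>U. h2 q \<noteq> 0 \<and> g q = g2 q / h2 q"
    unfolding rat_on_def by metis
  show ?thesis unfolding rat_on_def
    apply (rule exI[of _ "\<lambda>p. g1 p * h2 p + g2 p * h1 p"], rule exI[of _ "\<lambda>p. h1 p * h2 p"])
    using a by (auto intro!: polyfun.intros simp: field_simps)
qed

lemma rat_mult: "rat_on n U f \<Longrightarrow> rat_on n U g \<Longrightarrow> rat_on n U (\<lambda>p. f p * g p)"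
proof -
  assume "rat_on n U f" "rat_on n U g"
  then obtain g1 h1 g2 h2 where a: "g1 \<in> polyfun n" "h1 \<in> polyfun n" "\<forall>q\<in>U. h1 q \<noteq> 0 \<and> f q = g1 q / h1 q"
     "g2 \<in> polyfun n" "h2 \<in> polyfun n" "\<forall>q\<in>U. h2 q \<noteq> 0 \<and> g q = g2 q / h2 q"
    unfolding rat_on_def by metis
  show ?thesis unfolding rat_on_def
    apply (rule exI[of _ "\<lambda>p. g1 p * g2 p"], rule exI[of _ "\<lambda>p. h1 p * h2 p"])
    using a by (auto intro!: polyfun.intros simp: field_simps)
qed

lemma rat_inverse: "rat_on n U f \<Longrightarrow> (\<forall>q\<in>U. f q \<noteq> 0) \<Longrightarrow> rat_on n U (\<lambda>p. inverse (f p))"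
proof -
  assume "rat_on n U f" and nz: "\<forall>q\<in>U. f q \<noteq> 0"
  then obtain g1 h1 where a: "g1 \<in> polyfun n" "h1 \<in> polyfun n" "\<forall>q\<in>U. h1 q \<noteq> 0 \<and> f q = g1 q / h1 q"
    unfolding rat_on_def by metis
  show ?thesis unfolding rat_on_def
    apply (rule exI[of _ h1], rule exI[of _ g1])
    using a nz by (auto simp: field_simps)
qed

lemma rat_divide: "rat_on n U f \<Longrightarrow> rat_on n U g \<Longrightarrow> (\<forall>q\<in>U. g q \<noteq> 0) \<Longrightarrow> rat_on n U (\<lambda>p. f p / g p)"
  using rat_mult[OF _ rat_inverse] by (simp add: divide_inverse)

lemma rat_uminus: "rat_on n U f \<Longrightarrow> rat_on n U (\<lambda>p. - f p)"
  using rat_mult[OF rat_const[of n U "-1"]] by simp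

lemma rat_power: "rat_on n U f \<Longrightarrow> rat_on n U (\<lambda>p. f p ^ k)"
  by (induction k) (auto intro: rat_mult rat_const)

lemma rat_powi: "rat_on n U f \<Longrightarrow> (\<forall>q\<in>U. f q \<noteq> 0) \<Longrightarrow> rat_on n U (\<lambda>p. f p powi k)"
  unfolding power_int_def
  by (cases "k \<ge> 0") (auto intro: rat_power rat_inverse simp flip: power_inverse)

lemma zo_nonzero: "h \<in> polyfun n \<Longrightarrow> zariski_open n {q \<in> aff n. h q \<noteq> 0}"
  unfolding zariski_open_def by (rule exI[of _ "{h}"]) auto

lemma zo_aff: "zariski_open n (aff n)"
  using zo_nonzero[OF pf_const[of 1]] by simp

lemma rat_regular: "rat_on n U f \<Longrightarrow> U \<subseteq> aff n \<Longrightarrow> regular_on n U f"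
  unfolding rat_on_def regular_on_def using zo_aff by blast


definition diag3 :: "int \<Rightarrow> int \<Rightarrow> int \<Rightarrow> complex \<Rightarrow> (nat \<Rightarrow> complex) \<Rightarrow> (nat \<Rightarrow> complex)" where
  "diag3 w0 w1 w2 l v = (\<lambda>i. if i = 0 then l powi w0 * v 0 else if i = 1 then l powi w1 * v 1
      else if i = 2 then l powi w2 * v 2 else 0)"

lemma powi_shift: "l \<noteq> 0 \<Longrightarrow> w + int N \<ge> 0 \<Longrightarrow> l ^ nat (w + int N) / l ^ N = (l::complex) powi w"
proof -
  assume l: "l \<noteq> 0" and h: "w + int N \<ge> 0"
  have "l ^ nat (w + int N) = l powi (w + int N)" using h by (simp add: power_int_def)
  also have "\<dots> = l powi w * l ^ N" using l by (simp add: power_int_add)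
  finally show ?thesis using l by simp
qed

lemma diag3_rep: "lin_gm_rep 3 (diag3 w0 w1 w2)"
proof -
  define N where "N = nat \<bar>w0\<bar> + nat \<bar>w1\<bar> + nat \<bar>w2\<bar>"
  define wt where "wt i = (if i = 0 then w0 else if i = (1::nat) then w1 else w2)" for i
  define P where "P i j = (if i = j then monom 1 (nat (wt i + int N)) else (0::complex poly))" for i j
  have A: "\<forall>l. l \<noteq> 0 \<longrightarrow> (\<forall>v\<in>aff 3.
          diag3 w0 w1 w2 l v = (\<lambda>i. if i < 3 then (\<Sum>j<3. (poly (P i j) l / l ^ N) * v j) else 0))"
  proof (intro allI impI ballI ext)
    fix l :: complex and v i assume l: "l \<noteq> 0" and v: "v \<in> aff 3"
    have s: "(\<Sum>j<3. (poly (P i j) l / l ^ N) * v j) = (poly (P i i) l / l ^ N) * v i" if "i < 3"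
    proof -
      have "i = 0 \<or> i = 1 \<or> i = 2" using that by auto
      then show ?thesis by (auto simp: P_def eval_nat_numeral lessThan_Suc)
    qed
    have ge: "wt i + int N \<ge> 0" unfolding wt_def N_def by auto
    show "diag3 w0 w1 w2 l v i = (if i < 3 then (\<Sum>j<3. (poly (P i j) l / l ^ N) * v j) else 0)"
    proof (cases "i < 3")
      case True
      have "poly (P i i) l / l ^ N = l powi wt i"
        using powi_shift[OF l ge] by (simp add: P_def poly_monom)
      then show ?thesis using True s unfolding diag3_def wt_def
        by (auto simp: eval_nat_numeral less_Suc_eq)
    qed (auto simp: diag3_def)
  qed
  have B: "\<forall>v\<in>aff 3. diag3 w0 w1 w2 1 v = v"
    by (auto simp: diag3_def aff_def fun_eq_iff)
  have C: "\<forall>l u v. l \<noteq> 0 \<longrightarrow> u \<noteq> 0 \<longrightarrow> v \<in> aff 3 \<longrightarrow>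
      diag3 w0 w1 w2 (l * u) v = diag3 w0 w1 w2 l (diag3 w0 w1 w2 u v)"
    by (auto simp: diag3_def fun_eq_iff power_int_mult_distrib)
  show ?thesis unfolding lin_gm_rep_def using A B C by blast
qed


lemma powi_comb: "(c::complex) \<noteq> 0 \<Longrightarrow> (c powi a)^n * (c powi b)^k = c powi (a * int n + b * int k)"
  by (simp add: power_int_power' power_int_add)

lemma powi_comb1: "(c::complex) \<noteq> 0 \<Longrightarrow> (c powi a) * (c powi b)^k = c powi (a + b * int k)"
  using powi_comb[of c a 1 b k] by simp

definition Gen :: "nat \<Rightarrow> nat \<Rightarrow> nat \<Rightarrow> nat \<Rightarrow> (nat \<Rightarrow> complex) set" where
  "Gen a2 a3 e m = {p \<in> aff 4. p 0 * (1 + (p 0 * p 1)^e) + p 1^m * p 2^a2 + p 3^a3 = 0}"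

lemma general:
  fixes a2 a3 e m :: nat and wz \<alpha> \<beta> \<gamma> :: int
  assumes a2: "a2 > 0" and a3: "a3 > 0"
    and wz: "int a2 * wz = int (m+1) * int a2 * int a3"
    and e1: "int (m+1) * \<alpha> + int a2 * \<beta> = -1" and e2: "\<alpha> + int a3 * \<gamma> = -1"
  shows "gm_linearly_rational 4 (Gen a2 a3 e m) (diag4 (int(a2*a3)) (-int(a2*a3)) wz (int a2)) origin"
proof -
  define Nn where "Nn = int (a2 * a3)"
  define act where "act = diag4 Nn (-Nn) wz (int a2)"
  define C where "C p = 1 + (p 0 * p 1)^e" for p :: "nat \<Rightarrow> complex"
  define W where "W = {q \<in> aff 4. C q \<noteq> 0}"
  define U where "U = Gen a2 a3 e m \<inter> W"
  define \<phi> :: "(nat \<Rightarrow> complex) \<Rightarrow> nat \<Rightarrow> complex" where "\<phi> p = (\<lambda>i. if i = 0 then p 1 * C p powi \<alpha> else if i = 1 then p 2 * C p powi \<beta>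
        else if i = 2 then p 3 * C p powi \<gamma> else 0)" for p
  define S where "S v = -(v 0^(m+1) * v 1^a2 + v 0 * v 2^a3)" for v :: "nat \<Rightarrow> complex"
  define D where "D v = 1 + S v ^ e" for v
  define \<psi> :: "(nat \<Rightarrow> complex) \<Rightarrow> nat \<Rightarrow> complex" where "\<psi> v = (\<lambda>i. if i = 0 then -((v 0 * D v powi (-\<alpha>))^m * (v 1 * D v powi (-\<beta>))^a2
        + (v 2 * D v powi (-\<gamma>))^a3) / D v
     else if i = 1 then v 0 * D v powi (-\<alpha>) else if i = 2 then v 1 * D v powi (-\<beta>)
     else if i = 3 then v 2 * D v powi (-\<gamma>) else 0)" for v
  define U' where "U' = {v \<in> aff 3. D v \<noteq> 0}"
  define \<rho> where "\<rho> = diag3 (-Nn) wz (int a2)"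
  have Nn: "Nn = int a2 * int a3" by (simp add: Nn_def)
  have W1: "(l powi (-Nn))^(m+1) * (l powi wz)^a2 = 1" if "l \<noteq> 0" for l :: complex
  proof -
    have "-Nn * int (m+1) + wz * int a2 = 0" using wz Nn by (simp add: algebra_simps)
    then show ?thesis using powi_comb[OF that, of "-Nn" "m+1" wz a2] by simp
  qed
  have W2: "l powi (-Nn) * (l powi (int a2))^a3 = 1" if "l \<noteq> 0" for l :: complex
    using powi_comb1[OF that, of "-Nn" "int a2" a3] Nn by simp
  have W3: "l powi Nn * l powi (-Nn) = 1" if "l \<noteq> 0" for l :: complex
    using that by (simp add: power_int_minus)
  have W4: "(l powi (-Nn))^m * (l powi wz)^a2 = l powi Nn" if "l \<noteq> 0" for l :: complex
  proof -
    have "-Nn * int m + wz * int a2 = Nn" using wz Nn by (simp add: algebra_simps)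
    then show ?thesis using powi_comb[OF that, of "-Nn" "m" wz a2] by simp
  qed
  have W5: "(l powi (int a2))^a3 = l powi Nn" if "l \<noteq> 0" for l :: complex
    using that Nn by (simp add: power_mult flip: of_nat_mult)
  have K1: "(c powi \<alpha>)^(m+1) * (c powi \<beta>)^a2 = inverse c" if "c \<noteq> 0" for c :: complex
    using powi_comb[OF that, of \<alpha> "m+1" \<beta> a2] e1 by (simp add: algebra_simps)
  have K2: "c powi \<alpha> * (c powi \<gamma>)^a3 = inverse c" if "c \<noteq> 0" for c :: complex
    using powi_comb1[OF that, of \<alpha> \<gamma> a3] e2 by (simp add: algebra_simps)
  have K1': "(c powi (-\<alpha>))^(m+1) * (c powi (-\<beta>))^a2 = c" if "c \<noteq> 0" for c :: complex
  proof -
    have "-\<alpha> * int (m+1) + -\<beta> * int a2 = 1" using e1 by (simp add: algebra_simps)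
    then show ?thesis using powi_comb[OF that, of "-\<alpha>" "m+1" "-\<beta>" a2] by simp
  qed
  have K2': "c powi (-\<alpha>) * (c powi (-\<gamma>))^a3 = c" if "c \<noteq> 0" for c :: complex
  proof -
    have "-\<alpha> + -\<gamma> * int a3 = 1" using e2 by (simp add: algebra_simps)
    then show ?thesis using powi_comb1[OF that, of "-\<alpha>" "-\<gamma>" a3] by simp
  qed
  have inv: "c powi a * c powi (-a) = 1" if "c \<noteq> 0" for c :: complex and a
    using that by (simp add: power_int_minus)
  have act0: "act l p 0 = l powi Nn * p 0" "act l p 1 = l powi (-Nn) * p 1"
    "act l p 2 = l powi wz * p 2" "act l p 3 = l powi (int a2) * p 3" for l p
    by (simp_all add: act_def diag4_def)
  have actaff: "act l p \<in> aff 4" for l p by (simp add: act_def diag4_def aff_def)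
  have C_act: "C (act l p) = C p" if "l \<noteq> 0" for l p
  proof -
    have "act l p 0 * act l p 1 = (l powi Nn * l powi (-Nn)) * (p 0 * p 1)"
      by (simp add: act_def diag4_def algebra_simps)
    then show ?thesis using W3[OF that] by (simp add: C_def)
  qed
  have Ueq: "p \<in> U \<longleftrightarrow> p \<in> aff 4 \<and> C p \<noteq> 0 \<and> p 0 * C p + p 1^m * p 2^a2 + p 3^a3 = 0" for p
    by (auto simp: U_def W_def Gen_def C_def)
  have act_U: "act l p \<in> U" if l: "l \<noteq> 0" and p: "p \<in> U" for l p
  proof -
    have e: "p 0 * C p + p 1^m * p 2^a2 + p 3^a3 = 0" using p Ueq by blast
    have "act l p 0 * C (act l p) + act l p 1^m * act l p 2^a2 + act l p 3^a3
       = l powi Nn * p 0 * C p + ((l powi (-Nn))^m * (l powi wz)^a2) * (p 1^m * p 2^a2)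
         + (l powi (int a2))^a3 * p 3^a3"
      unfolding C_act[OF l] by (simp add: act_def diag4_def power_mult_distrib algebra_simps)
    also have "\<dots> = l powi Nn * (p 0 * C p + p 1^m * p 2^a2 + p 3^a3)"
      unfolding W4[OF l] W5[OF l] by (simp add: algebra_simps)
    finally show ?thesis using e p Ueq C_act[OF l] actaff by auto
  qed
  have D_rho: "D (\<rho> l v) = D v" if l: "l \<noteq> 0" for l v
  proof -
    have "S (\<rho> l v) = -(((l powi (-Nn))^(m+1) * (l powi wz)^a2) * (v 0^(m+1) * v 1^a2)
       + (l powi (-Nn) * (l powi (int a2))^a3) * (v 0 * v 2^a3))"
      unfolding S_def \<rho>_def diag3_def by (simp add: power_mult_distrib algebra_simps)
    then have "S (\<rho> l v) = S v" using W1[OF l] W2[OF l] by (simp add: S_def)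
    then show ?thesis by (simp add: D_def)
  qed
  have phi_c: "\<phi> p 0 = p 1 * C p powi \<alpha>" "\<phi> p 1 = p 2 * C p powi \<beta>"
     "\<phi> p 2 = p 3 * C p powi \<gamma>" "i \<ge> 3 \<Longrightarrow> \<phi> p i = 0" for p i
    by (simp_all add: \<phi>_def)
  have psi_c: "\<psi> v 1 = v 0 * D v powi (-\<alpha>)" "\<psi> v 2 = v 1 * D v powi (-\<beta>)"
     "\<psi> v 3 = v 2 * D v powi (-\<gamma>)" "i \<ge> 4 \<Longrightarrow> \<psi> v i = 0"
     "\<psi> v 0 = -(\<psi> v 1^m * \<psi> v 2^a2 + \<psi> v 3^a3) / D v" for v i
    by (simp_all add: \<psi>_def)
  have S_phi: "S (\<phi> p) = p 0 * p 1" if p: "p \<in> U" for p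
  proof -
    have c: "C p \<noteq> 0" and e: "p 0 * C p + p 1^m * p 2^a2 + p 3^a3 = 0" using p Ueq by auto
    have "S (\<phi> p) = -(((C p powi \<alpha>)^(m+1) * (C p powi \<beta>)^a2) * (p 1^(m+1) * p 2^a2)
        + (C p powi \<alpha> * (C p powi \<gamma>)^a3) * (p 1 * p 3^a3))"
      unfolding S_def phi_c by (simp add: power_mult_distrib algebra_simps)
    also have "\<dots> = -(inverse (C p) * p 1 * (p 1^m * p 2^a2 + p 3^a3))"
      unfolding K1[OF c] K2[OF c] by (simp add: algebra_simps)
    also have "\<dots> = p 0 * p 1"
    proof -
      have "p 1^m * p 2^a2 + p 3^a3 = - (p 0 * C p)" using e by (simp add: algebra_simps eq_neg_iff_add_eq_0)
      then show ?thesis using c by (simp add: field_simps)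
    qed
    finally show ?thesis .
  qed
  have D_phi: "D (\<phi> p) = C p" if "p \<in> U" for p
    using S_phi[OF that] by (simp add: D_def C_def)
  have psi01: "\<psi> v 0 * \<psi> v 1 = S v" if v: "D v \<noteq> 0" for v
  proof -
    have "\<psi> v 0 * \<psi> v 1 = -(\<psi> v 1^(m+1) * \<psi> v 2^a2 + \<psi> v 1 * \<psi> v 3^a3) / D v"
      unfolding psi_c(5)[of v] by (simp add: field_simps)
    also have "\<psi> v 1^(m+1) * \<psi> v 2^a2 = ((D v powi (-\<alpha>))^(m+1) * (D v powi (-\<beta>))^a2) * (v 0^(m+1) * v 1^a2)"
      unfolding psi_c by (simp add: power_mult_distrib algebra_simps)
    also have "\<psi> v 1 * \<psi> v 3^a3 = (D v powi (-\<alpha>) * (D v powi (-\<gamma>))^a3) * (v 0 * v 2^a3)"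
      unfolding psi_c by (simp add: power_mult_distrib algebra_simps)
    finally have h: "\<psi> v 0 * \<psi> v 1 = -(D v * (v 0^(m+1) * v 1^a2) + D v * (v 0 * v 2^a3)) / D v"
      unfolding K1'[OF v] K2'[OF v] .
    have "-(D v * (v 0^(m+1) * v 1^a2) + D v * (v 0 * v 2^a3)) / D v = -(v 0^(m+1) * v 1^a2 + v 0 * v 2^a3)"
      using v by (simp add: field_simps)
    then show ?thesis using h by (simp add: S_def)
  qed
  have C_psi: "C (\<psi> v) = D v" if "D v \<noteq> 0" for v
    using psi01[OF that] by (simp add: C_def D_def)
  have psi_phi: "\<psi> (\<phi> p) = p" if p: "p \<in> U" for p
  proof
    fix i
    have c: "C p \<noteq> 0" and e: "p 0 * C p + p 1^m * p 2^a2 + p 3^a3 = 0" and pa: "p \<in> aff 4"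
      using p Ueq by auto
    have 1: "\<psi> (\<phi> p) 1 = p 1" unfolding psi_c D_phi[OF p] phi_c
      using inv[OF c, of \<alpha>] by (simp add: mult.assoc)
    have 2: "\<psi> (\<phi> p) 2 = p 2" unfolding psi_c D_phi[OF p] phi_c
      using inv[OF c, of \<beta>] by (simp add: mult.assoc)
    have 3: "\<psi> (\<phi> p) 3 = p 3" unfolding psi_c D_phi[OF p] phi_c
      using inv[OF c, of \<gamma>] by (simp add: mult.assoc)
    have 0: "\<psi> (\<phi> p) 0 = p 0"
    proof -
      have "\<psi> (\<phi> p) 0 = -(p 1^m * p 2^a2 + p 3^a3) / C p"
        by (subst psi_c(5)) (simp only: 1 2 3 D_phi[OF p])
      also have "p 1^m * p 2^a2 + p 3^a3 = - (p 0 * C p)" using e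
        by (simp add: algebra_simps eq_neg_iff_add_eq_0)
      finally show ?thesis using c by simp
    qed
    show "\<psi> (\<phi> p) i = p i"
    proof (cases "i \<ge> 4")
      case True then show ?thesis using pa psi_c(4) by (simp add: aff_def)
    next
      case False then have "i = 0 \<or> i = 1 \<or> i = 2 \<or> i = 3" by auto
      then show ?thesis using 0 1 2 3 by auto
    qed
  qed
  have phi_psi: "\<phi> (\<psi> v) = v" if v: "v \<in> U'" for v
  proof
    fix i
    have d: "D v \<noteq> 0" and va: "v \<in> aff 3" using v by (auto simp: U'_def)
    have 0: "\<phi> (\<psi> v) 0 = v 0" unfolding phi_c C_psi[OF d] psi_c
      using inv[OF d, of "-\<alpha>"] by (simp add: mult.assoc)
    have 1: "\<phi> (\<psi> v) 1 = v 1" unfolding phi_c C_psi[OF d] psi_c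
      using inv[OF d, of "-\<beta>"] by (simp add: mult.assoc)
    have 2: "\<phi> (\<psi> v) 2 = v 2" unfolding phi_c C_psi[OF d] psi_c
      using inv[OF d, of "-\<gamma>"] by (simp add: mult.assoc)
    show "\<phi> (\<psi> v) i = v i"
    proof (cases "i \<ge> 3")
      case True then show ?thesis using va phi_c(4) by (simp add: aff_def)
    next
      case False then have "i = 0 \<or> i = 1 \<or> i = 2" by auto
      then show ?thesis using 0 1 2 by auto
    qed
  qed
  have phi_U: "\<phi> p \<in> U'" if p: "p \<in> U" for p
    using D_phi[OF p] p Ueq phi_c(4) by (auto simp: U'_def aff_def)
  have psi_U: "\<psi> v \<in> U" if v: "v \<in> U'" for v
  proof -
    have d: "D v \<noteq> 0" using v by (auto simp: U'_def)
    have "\<psi> v 0 * D v = -(\<psi> v 1^m * \<psi> v 2^a2 + \<psi> v 3^a3)"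
      using d by (subst psi_c(5)) simp
    then have "\<psi> v 0 * C (\<psi> v) + \<psi> v 1^m * \<psi> v 2^a2 + \<psi> v 3^a3 = 0"
      unfolding C_psi[OF d] by (simp add: algebra_simps)
    moreover have "\<psi> v \<in> aff 4" using psi_c(4) by (auto simp: aff_def)
    ultimately show ?thesis using Ueq C_psi[OF d] d by auto
  qed
  have equiv: "\<phi> (act l p) = \<rho> l (\<phi> p)" if l: "l \<noteq> 0" for l p
    unfolding \<phi>_def C_act[OF l] \<rho>_def diag3_def by (auto simp: act_def diag4_def fun_eq_iff)
  have rho_U': "\<rho> l v \<in> U'" if "l \<noteq> 0" "v \<in> U'" for l v
    using that D_rho by (auto simp: U'_def aff_def \<rho>_def diag3_def)
  have orig: "origin \<in> U"
  proof -
    have "C origin \<noteq> 0" by (cases e) (auto simp: C_def origin_def)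
    then show ?thesis using a2 a3 by (auto simp: Ueq origin_def aff_def zero_power)
  qed
  have zoW: "zariski_open 4 W" unfolding W_def C_def
    by (rule zo_nonzero) (auto intro!: polyfun.intros pf_pow)
  have zoU': "zariski_open 3 U'" unfolding U'_def D_def S_def
    by (rule zo_nonzero, (rule polyfun.intros pf_pow pf_uminus | simp)+)
  have Cnz: "\<forall>q\<in>U. C q \<noteq> 0" using Ueq by auto
  have Dnz: "\<forall>q\<in>U'. D q \<noteq> 0" by (auto simp: U'_def)
  have Uaff: "U \<subseteq> aff 4" using Ueq by auto
  have U'aff: "U' \<subseteq> aff 3" by (auto simp: U'_def)
  have rC: "rat_on 4 U C" unfolding C_def
    by ((rule rat_add rat_const rat_power rat_mult rat_var | simp)+)
  have rD: "rat_on 3 U' D" unfolding D_def S_def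
    by ((rule rat_add rat_const rat_power rat_mult rat_var rat_uminus | simp)+)
  have rphi: "rat_on 4 U (\<lambda>q. \<phi> q i)" if "i < 3" for i
  proof -
    have r: "rat_on 4 U (\<lambda>q. q j * C q powi a)" if "j < 4" for j a
      by (rule rat_mult[OF rat_var[OF that] rat_powi[OF rC Cnz]])
    have f0: "rat_on 4 U (\<lambda>q. \<phi> q 0)" using r[of 1 \<alpha>] unfolding phi_c by simp
    have f1: "rat_on 4 U (\<lambda>q. \<phi> q 1)" using r[of 2 \<beta>] unfolding phi_c by simp
    have f2: "rat_on 4 U (\<lambda>q. \<phi> q 2)" using r[of 3 \<gamma>] unfolding phi_c by simp
    have "i = 0 \<or> i = 1 \<or> i = 2" using that by auto
    then show ?thesis by (elim disjE) (simp_all only: f0 f1 f2)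
  qed
  have rpsi: "rat_on 3 U' (\<lambda>v. \<psi> v i)" if "i < 4" for i
  proof -
    have r: "rat_on 3 U' (\<lambda>v. v j * D v powi a)" if "j < 3" for j a
      by (rule rat_mult[OF rat_var[OF that] rat_powi[OF rD Dnz]])
    have r1: "rat_on 3 U' (\<lambda>v. \<psi> v 1)" using r[of 0 "-\<alpha>"] unfolding psi_c by simp
    have r2: "rat_on 3 U' (\<lambda>v. \<psi> v 2)" using r[of 1 "-\<beta>"] unfolding psi_c by simp
    have r3: "rat_on 3 U' (\<lambda>v. \<psi> v 3)" using r[of 2 "-\<gamma>"] unfolding psi_c by simp
    have r0: "rat_on 3 U' (\<lambda>v. \<psi> v 0)"
      apply (subst psi_c(5))
      by (rule rat_divide[OF rat_uminus[OF rat_add[OF rat_mult[OF rat_power[OF r1] rat_power[OF r2]]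
           rat_power[OF r3]]] rD Dnz])
    have "i = 0 \<or> i = 1 \<or> i = 2 \<or> i = 3" using that by auto
    then show ?thesis by (elim disjE) (simp_all only: r0 r1 r2 r3)
  qed
  have regphi: "regular_map 4 3 U \<phi>"
    unfolding regular_map_def using rphi rat_regular[OF _ Uaff] phi_U U'aff by blast
  have regpsi: "regular_map 3 4 U' \<psi>"
    unfolding regular_map_def using rpsi rat_regular[OF _ U'aff] psi_U Uaff by blast
  have act_eq: "diag4 (int(a2*a3)) (-int(a2*a3)) wz (int a2) = act" by (simp add: act_def Nn_def)
  show ?thesis unfolding gm_linearly_rational_def act_eq
    apply (rule exI[of _ U], rule exI[of _ W])
    apply (intro conjI)
    using zoW apply simp
    apply (simp add: U_def)
    using orig apply simp
    using act_U apply blast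
    apply (rule exI[of _ 3], rule exI[of _ \<rho>], rule exI[of _ U'], rule exI[of _ \<phi>], rule exI[of _ \<psi>])
    using diag3_rep[of "-Nn" wz "int a2"] zoU' rho_U' regphi regpsi phi_U psi_U psi_phi phi_psi equiv
    unfolding \<rho>_def by blast
qed

theorem proposition3p5:
  fixes a2 a3 k d :: nat
  assumes "a2 > 0" and "a3 > 0" and "k > 0" and "coprime a2 a3"
  shows "gm_linearly_rational 4 (X1 a2 a3 k)
           (diag4 (int (a2 * a3)) (- int (a2 * a3)) (int a3) (int a2)) origin
       \<and> (d \<ge> 2 \<longrightarrow> coprime (d * a3) a2 \<longrightarrow>
         gm_linearly_rational 4 (X2 a2 a3 d)
           (diag4 (int (a2 * a3)) (- int (a2 * a3)) (int (d * a3)) (int a2)) origin)"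
proof (intro conjI impI)
  have "X1 a2 a3 k = Gen a2 a3 (k-1) 0"
  proof -
    have h: "p 0 ^ k * p 1 ^ (k - 1) = p 0 * (p 0 * p 1) ^ (k - 1)" for p :: "nat \<Rightarrow> complex"
      using assms(3) by (cases k) (auto simp: power_mult_distrib)
    have eq: "p 0 + p 0 ^ k * p 1 ^ (k - 1) + p 2 ^ a2 + p 3 ^ a3
       = p 0 * (1 + (p 0 * p 1)^(k-1)) + p 1^0 * p 2^a2 + p 3^a3" for p :: "nat \<Rightarrow> complex"
      unfolding h by (simp add: algebra_simps)
    show ?thesis unfolding X1_def Gen_def by (simp only: eq)
  qed
  moreover have "gm_linearly_rational 4 (Gen a2 a3 (k-1) 0)
           (diag4 (int (a2 * a3)) (- int (a2 * a3)) (int a3) (int a2)) origin"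
    by (rule general[where \<alpha>="-1" and \<beta>=0 and \<gamma>=0]) (use assms in auto)
  ultimately show "gm_linearly_rational 4 (X1 a2 a3 k)
           (diag4 (int (a2 * a3)) (- int (a2 * a3)) (int a3) (int a2)) origin" by simp
next
  assume d: "d \<ge> 2" and cp: "coprime (d * a3) a2"
  have "X2 a2 a3 d = Gen a2 a3 (d-1) (d-1)"
  proof -
    have h: "p 1 ^ (d - 1) * p 0 ^ d = p 0 * (p 0 * p 1) ^ (d - 1)" for p :: "nat \<Rightarrow> complex"
      using d by (cases d) (auto simp: power_mult_distrib)
    have eq: "p 0 + p 1 ^ (d - 1) * (p 0 ^ d + p 2 ^ a2) + p 3 ^ a3
       = p 0 * (1 + (p 0 * p 1)^(d-1)) + p 1^(d-1) * p 2^a2 + p 3^a3" for p :: "nat \<Rightarrow> complex"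
      unfolding distrib_left h by (simp add: algebra_simps)
    show ?thesis unfolding X2_def Gen_def by (simp only: eq)
  qed
  moreover
  obtain u v :: int where uv: "u * int (d * a3) + v * int a2 = 1"
  proof -
    have "gcd (int (d * a3)) (int a2) = 1" 
    proof -
      have "gcd (d * a3) a2 = 1" using cp by (simp add: coprime_iff_gcd_eq_1)
      then have "int (gcd (d * a3) a2) = 1" by simp
      then show ?thesis by (simp only: gcd_int_int_eq)
    qed
    then show ?thesis using bezout_int[of "int (d * a3)" "int a2"] that by auto
  qed
  define \<gamma> where "\<gamma> = (1 - int d) * u"
  define \<beta> where "\<beta> = (int d - 1) * v"
  define \<alpha> where "\<alpha> = -1 - int a3 * \<gamma>"
  have md: "int (d - 1 + 1) = int d" using d by simp
  have e1: "int (d - 1 + 1) * \<alpha> + int a2 * \<beta> = -1"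
  proof -
    have "int d * \<alpha> + int a2 * \<beta> = - int d + (int d - 1) * (u * int (d * a3) + v * int a2)"
      unfolding \<alpha>_def \<beta>_def \<gamma>_def by (simp add: algebra_simps)
    then show ?thesis unfolding md uv by simp
  qed
  have "gm_linearly_rational 4 (Gen a2 a3 (d-1) (d-1))
           (diag4 (int (a2 * a3)) (- int (a2 * a3)) (int (d * a3)) (int a2)) origin"
    by (rule general[where \<alpha>=\<alpha> and \<beta>=\<beta> and \<gamma>=\<gamma>]) (use assms e1 md in \<open>auto simp: \<alpha>_def\<close>)
  ultimately show "gm_linearly_rational 4 (X2 a2 a3 d)
           (diag4 (int (a2 * a3)) (- int (a2 * a3)) (int (d * a3)) (int a2)) origin" by simp
qed

end
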